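(* Let $W$ be a finite set of possible worlds and let $\bullet$ be an operator assigning to every pair $(G_1,G_2)$ of belief algebras on $W$ a belief algebra $G_1\bullet G_2$ on $W$, and suppose $\bullet$ satisfies the postulates (RA1)–(RA6) described in the context. Then for any belief algebras $G_1,G_2$ on $W$, the revision result $G_1\bullet G_2$ is unique, and $$G_1\bullet G_2=\operatorname{Gen}\big((G_1\cup G_2)\cap (\operatorname{Com}(G_1)\bullet \operatorname{Com}(G_2))\big).$$
   Context: $W$ is a finite nonempty set (the possible worlds of a finite propositional language). Let $R_W=\{(U,V)\mid U,V\subseteq W,\ U\cap V=\varnothing\}$. A belief algebra on $W$ is a pair $(2^W,\gg)$, where $\gg$ is a binary relation on $2^W$ satisfying, for all $U,V,U_1,V_1,U_2,V_2\subseteq W$: (A0) $\gg\subseteq R_W$; (A1) $U\gg\varnothing$ iff $U\neq\varnothing$; (A2) if $U\gg V$ then not $V\gg U$; (A3) if $U_1\supseteq U$, $U\gg V$, $V\supseteq V_1$ and $U_1\cap V_1=\varnothing$, then $U_1\gg V_1$; (A4) if $U=U_1\cup V_1=U_2\cup V_2$, $U_1\gg V_1$ and $U_2\gg V_2$, then $U_1\cap U_2\gg V_1\cup V_2$. A belief algebra is identified with its relation $\gg$, viewed as a set of pairs; $(U,V)\in G$ means $U\gg V$, and $\subseteq,\cup,\cap$ between belief algebras refer to these sets of pairs. For $\Omega\subseteq R_W$, $\operatorname{Gen}(\Omega)$ is the smallest subset of $R_W$ containing $\Omega$ and closed under: (i) it contains $(U,\varnothing)$ for every nonempty $U\subseteq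 W$; (ii) if $(U,V)$ is in it, $U\subseteq U_1$, $V_1\subseteq V$, $U_1\cap V_1=\varnothing$, then $(U_1,V_1)$ is in it; (iii) if $U_1\cup V_1=U_2\cup V_2$ and $(U_1,V_1),(U_2,V_2)$ are in it, then $(U_1\cap U_2,V_1\cup V_2)$ is in it; when $\operatorname{Gen}(\Omega)$ satisfies (A2) it is regarded as a belief algebra. Total preorders: for a total preorder $\preceq$ on $W$, write $\omega\prec\omega'$ iff $\omega\preceq\omega'$ and not $\omega'\preceq\omega$. The relation defined by $U\gg V$ iff $U\cap V=\varnothing$ and there is $\omega_1\in U$ with $\omega_1\prec\omega_2$ for all $\omega_2\in V$ is a belief algebra; belief algebras arising this way are called complete belief algebras (CBAs). Backbone: every belief algebra $(2^W,\gg)$ has a unique backbone, a sequence $U_1,\dots,U_n$ of nonempty pairwise disjoint sets with union $W$, such that $U_i\gg U_{i+1}$ for all $i<n$ and, for each $i$, any two disjoint nonempty subsets $V_1,V_2$ of $U_i$ are incomparable under $\gg$. For nonempty $V\subseteq W$, the support $I(V)$ of $V$ (w.r.t. this backbone) is $U_i$ for the least index $i$ with $V\cap U_i\neq\varnothing$. $\operatorname{Com}(G)$ denotes the unique CBA that contains $G$ and has the same backbone as $G$ (explicitly, the CBA of the total preorder with $\omega\preceq\omega'$ iff the backbone block containing $\omega$ has index $\le$ that of the block containing $\omega'$). Write $G_1\leq G_2$ iff $G_1,G_2$ have the same backbone and $G_1\subseteq G_2$. Postulates for $\bullet$ (for all belief algebras $G_1=(2^W,\gg_1)$, $G_2=(2^W,\gg_2)$,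 $G_1',G_2'$): (RA1) $G_2\subseteq G_1\bullet G_2$. (RA2) There is $\Omega\subseteq G_1\cup G_2$ with $G_1\bullet G_2=\operatorname{Gen}(\Omega)$. (RA3) If $G_1,G_2$ are CBAs then $G_1\bullet G_2$ is a CBA. (RA4) If $G_1,G_2$ are CBAs and $\omega,\omega'\in W$ satisfy $I_2(\{\omega\})=I_2(\{\omega'\})$, where $I_2$ is the support w.r.t. the backbone of $G_2$, then $(\{\omega\},\{\omega'\})\in G_1\bullet G_2$ iff $\{\omega\}\gg_1\{\omega'\}$. (RA5) If $G_1\leq G_1'$ and $G_2\leq G_2'$ then $G_1\bullet G_2\subseteq G_1'\bullet G_2'$. (RA6) If $\Omega\subseteq G_1\cup G_2$, $\operatorname{Gen}(\Omega)\subseteq \operatorname{Com}(G_1)\bullet\operatorname{Com}(G_2)$ and $G_1\bullet G_2\subseteq\operatorname{Gen}(\Omega)$, then $G_1\bullet G_2=\operatorname{Gen}(\Omega)$. *)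

theory Defs
  imports Main
begin

text \<open>Worlds: a finite (nonempty) type 'a, so W = UNIV. A belief algebra is a set of
pairs of sets of worlds.\<close>

type_synonym 'a brel = "('a set \<times> 'a set) set"

definition belief_algebra :: "'a brel \<Rightarrow> bool" where
  "belief_algebra G \<longleftrightarrow>
     (\<forall>U V. (U, V) \<in> G \<longrightarrow> U \<inter> V = {}) \<and>
     (\<forall>U. (U, {}) \<in> G \<longleftrightarrow> U \<noteq> {}) \<and>
     (\<forall>U V. (U, V) \<in> G \<longrightarrow> (V, U) \<notin> G) \<and>
     (\<forall>U V U1 V1. U \<subseteq> U1 \<longrightarrow> (U, V) \<in> G \<longrightarrow> V1 \<subseteq> V \<longrightarrow> U1 \<inter> V1 = {}
        \<longrightarrow> (U1, V1) \<in> G) \<and>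
     (\<forall>U U1 V1 U2 V2. U = U1 \<union> V1 \<longrightarrow> U = U2 \<union> V2 \<longrightarrow> (U1, V1) \<in> G \<longrightarrow>
        (U2, V2) \<in> G \<longrightarrow> (U1 \<inter> U2, V1 \<union> V2) \<in> G)"

inductive_set Gen :: "'a brel \<Rightarrow> 'a brel" for \<Omega> :: "'a brel" where
  base: "x \<in> \<Omega> \<Longrightarrow> x \<in> Gen \<Omega>"
| empty: "U \<noteq> {} \<Longrightarrow> (U, {}) \<in> Gen \<Omega>"
| mono: "(U, V) \<in> Gen \<Omega> \<Longrightarrow> U \<subseteq> U1 \<Longrightarrow> V1 \<subseteq> V \<Longrightarrow> U1 \<inter> V1 = {}
           \<Longrightarrow> (U1, V1) \<in> Gen \<Omega>"
| meet: "U1 \<union> V1 = U2 \<union> V2 \<Longrightarrow> (U1, V1) \<in> Gen \<Omega> \<Longrightarrow> (U2, V2) \<in> Gen \<Omega>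
           \<Longrightarrow> (U1 \<inter> U2, V1 \<union> V2) \<in> Gen \<Omega>"

definition cba_of :: "('a \<Rightarrow> 'a \<Rightarrow> bool) \<Rightarrow> 'a brel" where
  "cba_of le = {(U, V). U \<inter> V = {} \<and> (\<exists>w1\<in>U. \<forall>w2\<in>V. le w1 w2 \<and> \<not> le w2 w1)}"

definition total_preorder :: "('a \<Rightarrow> 'a \<Rightarrow> bool) \<Rightarrow> bool" where
  "total_preorder le \<longleftrightarrow> (\<forall>x y. le x y \<or> le y x) \<and> (\<forall>x y z. le x y \<longrightarrow> le y z \<longrightarrow> le x z)"

definition is_CBA :: "'a brel \<Rightarrow> bool" where
  "is_CBA G \<longleftrightarrow> (\<exists>le. total_preorder le \<and> G = cba_of le)"

definition is_backbone :: "'a brel \<Rightarrow> 'a set list \<Rightarrow> bool" where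
  "is_backbone G Us \<longleftrightarrow>
     (\<forall>U\<in>set Us. U \<noteq> {}) \<and>
     (\<forall>i j. i < length Us \<longrightarrow> j < length Us \<longrightarrow> i \<noteq> j \<longrightarrow> Us ! i \<inter> Us ! j = {}) \<and>
     \<Union>(set Us) = UNIV \<and>
     (\<forall>i. Suc i < length Us \<longrightarrow> (Us ! i, Us ! Suc i) \<in> G) \<and>
     (\<forall>i < length Us. \<forall>V1 V2. V1 \<subseteq> Us ! i \<longrightarrow> V2 \<subseteq> Us ! i \<longrightarrow> V1 \<inter> V2 = {} \<longrightarrow>
        V1 \<noteq> {} \<longrightarrow> V2 \<noteq> {} \<longrightarrow> (V1, V2) \<notin> G)"

definition backbone :: "'a brel \<Rightarrow> 'a set list" where
  "backbone G = (THE Us. is_backbone G Us)"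

definition support :: "'a brel \<Rightarrow> 'a set \<Rightarrow> 'a set" where
  "support G V = backbone G ! (LEAST i. V \<inter> backbone G ! i \<noteq> {})"

definition blk :: "'a brel \<Rightarrow> 'a \<Rightarrow> nat" where
  "blk G w = (LEAST i. w \<in> backbone G ! i)"

definition Com :: "'a brel \<Rightarrow> 'a brel" where
  "Com G = cba_of (\<lambda>x y. blk G x \<le> blk G y)"

definition ba_le :: "'a brel \<Rightarrow> 'a brel \<Rightarrow> bool" where
  "ba_le G1 G2 \<longleftrightarrow> backbone G1 = backbone G2 \<and> G1 \<subseteq> G2"

end

theory Submission
  imports Defs
begin

lemma ba_parts:
  assumes "belief_algebra G"
  shows ba0': "\<forall>U V. (U, V) \<in> G \<longrightarrow> U \<inter> V = {}"
   and ba1': "\<forall>U. (U, {}) \<in> G \<longleftrightarrow> U \<noteq> {}"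
   and ba2': "\<forall>U V. (U, V) \<in> G \<longrightarrow> (V, U) \<notin> G"
   and ba3': "\<forall>U V U1 V1. U \<subseteq> U1 \<longrightarrow> (U, V) \<in> G \<longrightarrow> V1 \<subseteq> V \<longrightarrow> U1 \<inter> V1 = {}
        \<longrightarrow> (U1, V1) \<in> G"
   and ba4': "\<forall>U U1 V1 U2 V2. U = U1 \<union> V1 \<longrightarrow> U = U2 \<union> V2 \<longrightarrow> (U1, V1) \<in> G \<longrightarrow>
        (U2, V2) \<in> G \<longrightarrow> (U1 \<inter> U2, V1 \<union> V2) \<in> G"
  using assms unfolding belief_algebra_def
  apply - apply (elim conjE, assumption)+ done

lemma ba0: "belief_algebra G \<Longrightarrow> (U,V) \<in> G \<Longrightarrow> U \<inter> V = {}"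
  using ba0' by blast

lemma ba1: "belief_algebra G \<Longrightarrow> (U,{}) \<in> G \<longleftrightarrow> U \<noteq> {}"
  using ba1' by blast

lemma ba2: "belief_algebra G \<Longrightarrow> (U,V) \<in> G \<Longrightarrow> (V,U) \<notin> G"
  using ba2' by blast

lemma ba3: "belief_algebra G \<Longrightarrow> U \<subseteq> U1 \<Longrightarrow> (U,V) \<in> G \<Longrightarrow> V1 \<subseteq> V \<Longrightarrow> U1 \<inter> V1 = {} \<Longrightarrow> (U1,V1) \<in> G"
  using ba3' by blast

lemma ba4: "belief_algebra G \<Longrightarrow> U1 \<union> V1 = U2 \<union> V2 \<Longrightarrow> (U1,V1) \<in> G \<Longrightarrow> (U2,V2) \<in> G \<Longrightarrow> (U1 \<inter> U2, V1 \<union> V2) \<in> G"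
  using ba4'[of G] by blast

lemma ba_noempty: "belief_algebra G \<Longrightarrow> ({}, V) \<notin> G"
  using ba1[of G "{}"] ba3[of G "{}" "{}" V "{}"] by auto

lemma Gen_least: assumes "belief_algebra H" "\<Omega> \<subseteq> H" shows "Gen \<Omega> \<subseteq> H"
proof
  fix x assume "x \<in> Gen \<Omega>" then show "x \<in> H"
  proof induction
    case (base x) then show ?case using assms(2) by blast
  next
    case (empty U) then show ?case using ba1[OF assms(1)] by simp
  next
    case (mono U V U1 V1) then show ?case using ba3[OF assms(1)] by blast
  next
    case (meet U1 V1 U2 V2) then show ?case using ba4[OF assms(1)] by blast
  qed
qed

lemma Gen_mono: assumes "\<Omega> \<subseteq> \<Omega>'" shows "Gen \<Omega> \<subseteq> Gen \<Omega>'"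
proof
  fix x assume "x \<in> Gen \<Omega>" then show "x \<in> Gen \<Omega>'"
  proof induction
    case (base x) then show ?case using assms by (blast intro: Gen.base)
  next
    case (empty U) then show ?case by (rule Gen.empty)
  next
    case (mono U V U1 V1) then show ?case by (blast intro: Gen.mono)
  next
    case (meet U1 V1 U2 V2) then show ?case by (blast intro: Gen.meet)
  qed
qed

lemma cba_ba: assumes tp: "total_preorder le" shows "belief_algebra (cba_of le)"
proof -
  have tot: "\<And>x y. le x y \<or> le y x" and tr: "\<And>x y z. le x y \<Longrightarrow> le y z \<Longrightarrow> le x z"
    using tp unfolding total_preorder_def by blast+
  have a4: "(U1 \<inter> U2, V1 \<union> V2) \<in> cba_of le"
    if e: "U1 \<union> V1 = U2 \<union> V2" and h1: "(U1, V1) \<in> cba_of le" and h2: "(U2, V2) \<in> cba_of le"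
    for U1 V1 U2 V2
  proof -
    obtain w1 where w1: "w1 \<in> U1" "\<forall>v\<in>V1. le w1 v \<and> \<not> le v w1" "U1 \<inter> V1 = {}"
      using h1 unfolding cba_of_def by blast
    obtain w2 where w2: "w2 \<in> U2" "\<forall>v\<in>V2. le w2 v \<and> \<not> le v w2" "U2 \<inter> V2 = {}"
      using h2 unfolding cba_of_def by blast
    have gen: "(U1 \<inter> U2, V1 \<union> V2) \<in> cba_of le"
      if "w \<in> U1" "w \<in> U2" "\<forall>v\<in>V1. le w v \<and> \<not> le v w" "\<forall>v\<in>V2. le w v \<and> \<not> le v w" for w
      using that w1(3) w2(3) unfolding cba_of_def by blast
    show ?thesis
    proof (cases "le w1 w2")
      case True
      have s2: "\<forall>v\<in>V2. le w1 v \<and> \<not> le v w1" using True w2(2) tr by blast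
      have "w1 \<in> U2" using w1(1) e s2 by blast
      then show ?thesis using gen[of w1] w1 s2 by blast
    next
      case False
      then have T: "le w2 w1" using tot by blast
      have s1: "\<forall>v\<in>V1. le w2 v \<and> \<not> le v w2" using T w1(2) tr by blast
      have "w2 \<in> U1" using w2(1) e s1 by blast
      then show ?thesis using gen[of w2] w2 s1 by blast
    qed
  qed
  show ?thesis unfolding belief_algebra_def
  proof (intro conjI allI impI)
    show "\<And>U V. (U, V) \<in> cba_of le \<Longrightarrow> U \<inter> V = {}" unfolding cba_of_def by blast
    show "\<And>U. ((U, {}) \<in> cba_of le) = (U \<noteq> {})" unfolding cba_of_def by blast
    show "\<And>U V. (U, V) \<in> cba_of le \<Longrightarrow> (V, U) \<notin> cba_of le" unfolding cba_of_def by blast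
    show "\<And>U V U1 V1. U \<subseteq> U1 \<Longrightarrow> (U, V) \<in> cba_of le \<Longrightarrow> V1 \<subseteq> V \<Longrightarrow> U1 \<inter> V1 = {} \<Longrightarrow> (U1, V1) \<in> cba_of le"
      unfolding cba_of_def by blast
    show "\<And>U U1 V1 U2 V2. U = U1 \<union> V1 \<Longrightarrow> U = U2 \<union> V2 \<Longrightarrow> (U1, V1) \<in> cba_of le \<Longrightarrow>
        (U2, V2) \<in> cba_of le \<Longrightarrow> (U1 \<inter> U2, V1 \<union> V2) \<in> cba_of le"
      using a4 by blast
  qed
qed

lemma Com_ba: "belief_algebra (Com G)"
  unfolding Com_def by (rule cba_ba) (auto simp: total_preorder_def)

lemma Com_mem: "(U,V) \<in> Com G \<longleftrightarrow> U \<inter> V = {} \<and> (\<exists>w1\<in>U. \<forall>w2\<in>V. blk G w1 < blk G w2)"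
  unfolding Com_def cba_of_def by (simp add: less_le_not_le[symmetric])

definition suf :: "'a set list \<Rightarrow> nat \<Rightarrow> 'a set" where
  "suf Us k = (\<Union>j\<in>{k..<length Us}. Us ! j)"

lemma suf_Suc: "k < length Us \<Longrightarrow> suf Us k = Us ! k \<union> suf Us (Suc k)"
proof -
  assume k: "k < length Us"
  have "{k..<length Us} = insert k {Suc k..<length Us}" using k by auto
  then show ?thesis unfolding suf_def by simp
qed

lemma suf_len: "suf Us (length Us) = {}"
  unfolding suf_def by auto

lemma bb_disj: "is_backbone G Us \<Longrightarrow> i < length Us \<Longrightarrow> j < length Us \<Longrightarrow> i \<noteq> j \<Longrightarrow> Us ! i \<inter> Us ! j = {}"
  unfolding is_backbone_def by (elim conjE) (erule allE[of _ i], erule allE[of _ j], simp)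

lemma bb_ne: "is_backbone G Us \<Longrightarrow> i < length Us \<Longrightarrow> Us ! i \<noteq> {}"
  unfolding is_backbone_def by (elim conjE) simp

lemma bb_chain: "is_backbone G Us \<Longrightarrow> Suc i < length Us \<Longrightarrow> (Us ! i, Us ! Suc i) \<in> G"
  unfolding is_backbone_def by (elim conjE) simp

lemma bb_int: "is_backbone G Us \<Longrightarrow> i < length Us \<Longrightarrow> V1 \<subseteq> Us ! i \<Longrightarrow> V2 \<subseteq> Us ! i \<Longrightarrow> V1 \<inter> V2 = {} \<Longrightarrow>
        V1 \<noteq> {} \<Longrightarrow> V2 \<noteq> {} \<Longrightarrow> (V1, V2) \<notin> G"
  unfolding is_backbone_def by (elim conjE) simp

lemma bb_idx: "is_backbone G Us \<Longrightarrow> \<exists>i<length Us. w \<in> Us ! i"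
proof -
  assume "is_backbone G Us"
  then have "\<Union>(set Us) = UNIV" unfolding is_backbone_def by (elim conjE)
  then have "w \<in> \<Union>(set Us)" by simp
  then obtain U where "U \<in> set Us" "w \<in> U" by blast
  then show ?thesis by (metis in_set_conv_nth)
qed

lemma bb_suf_disj: "is_backbone G Us \<Longrightarrow> k < length Us \<Longrightarrow> Us ! k \<inter> suf Us (Suc k) = {}"
proof -
  assume bb: "is_backbone G Us" and k: "k < length Us"
  show ?thesis
  proof (rule ccontr)
    assume "Us ! k \<inter> suf Us (Suc k) \<noteq> {}"
    then obtain w j where "w \<in> Us ! k" "w \<in> Us ! j" "Suc k \<le> j" "j < length Us"
      unfolding suf_def by auto
    then show False using bb_disj[OF bb k, of j] by auto
  qed
qed

lemma mem_suf: "is_backbone G Us \<Longrightarrow> i < length Us \<Longrightarrow> w \<in> Us ! i \<Longrightarrow> (w \<in> suf Us k \<longleftrightarrow> k \<le> i)"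
proof -
  assume bb: "is_backbone G Us" and i: "i < length Us" and w: "w \<in> Us ! i"
  show ?thesis
  proof
    assume "w \<in> suf Us k"
    then obtain j where "w \<in> Us ! j" "k \<le> j" "j < length Us"
      unfolding suf_def by auto
    then show "k \<le> i" using bb_disj[OF bb i, of j] w by (cases "i = j") auto
  next
    assume "k \<le> i" then show "w \<in> suf Us k" unfolding suf_def using i w by auto
  qed
qed

lemma ba_trans:
  assumes ba: "belief_algebra G" and ab: "(A,B) \<in> G" and bc: "(B,C) \<in> G" and ac: "A \<inter> C = {}"
  shows "(A, B \<union> C) \<in> G"
proof -
  have d1: "A \<inter> B = {}" "B \<inter> C = {}" using ba0[OF ba] ab bc by auto
  have p1: "(A \<union> C, B) \<in> G" using ba3[OF ba, of A "A \<union> C" B B] ab d1 by blast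
  have p2: "(A \<union> B, C) \<in> G" using ba3[OF ba, of B "A \<union> B" C C] bc d1 ac by blast
  have e: "(A \<union> C) \<union> B = (A \<union> B) \<union> C" by blast
  have "((A \<union> C) \<inter> (A \<union> B), B \<union> C) \<in> G" using ba4[OF ba e p1 p2] by simp
  moreover have "(A \<union> C) \<inter> (A \<union> B) = A" using d1 by blast
  ultimately show ?thesis by simp
qed

lemma bb_T:
  assumes ba: "belief_algebra G" and bb: "is_backbone G Us"
  shows "k < length Us \<Longrightarrow> (Us ! k, suf Us (Suc k)) \<in> G"
proof (induction "length Us - Suc k" arbitrary: k)
  case 0
  then have "Suc k = length Us" by simp
  then show ?case using suf_len[of Us] ba1[OF ba] bb_ne[OF bb 0(2)] by simp
next
  case (Suc d)
  then have k1: "Suc k < length Us" by simp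
  have IH: "(Us ! Suc k, suf Us (Suc (Suc k))) \<in> G" using Suc(1)[of "Suc k"] Suc(2) k1 by simp
  have "suf Us (Suc k) = Us ! Suc k \<union> suf Us (Suc (Suc k))" using suf_Suc[OF k1] .
  moreover have "Us ! k \<inter> suf Us (Suc (Suc k)) = {}" using bb_suf_disj[OF bb Suc(3)] calculation by blast
  ultimately show ?case using ba_trans[OF ba bb_chain[OF bb k1] IH] by simp
qed

lemma bb_K:
  assumes ba: "belief_algebra G" and bb: "is_backbone G Us" and k: "k < length Us"
    and V: "V \<subseteq> Us ! k" "V \<noteq> {}" and h: "(suf Us k - V, V) \<in> G"
  shows False
proof -
  have T: "(Us ! k, suf Us (Suc k)) \<in> G" using bb_T[OF ba bb k] .
  have S: "suf Us k = Us ! k \<union> suf Us (Suc k)" using suf_Suc[OF k] .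
  have D: "Us ! k \<inter> suf Us (Suc k) = {}" using bb_suf_disj[OF bb k] .
  have "(suf Us k - V) \<union> V = Us ! k \<union> suf Us (Suc k)" using S V by blast
  from ba4[OF ba this h T] have "((suf Us k - V) \<inter> Us ! k, V \<union> suf Us (Suc k)) \<in> G" .
  moreover have "(suf Us k - V) \<inter> Us ! k = Us ! k - V" using S by blast
  ultimately have R: "(Us ! k - V, V \<union> suf Us (Suc k)) \<in> G" by simp
  show False
  proof (cases "Us ! k - V = {}")
    case True then show False using R ba_noempty[OF ba] by metis
  next
    case False
    have "(Us ! k - V, V) \<in> G" using ba3[OF ba _ R, of "Us ! k - V" V] ba0[OF ba R] by blast
    then show False using bb_int[OF bb k, of "Us ! k - V" V] False V by blast
  qed
qed

lemma bb_L1: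
  assumes ba: "belief_algebra G" and bb: "is_backbone G Us" and k: "k < length Us"
    and X: "X \<subseteq> suf Us k" and h: "(X, suf Us k - X) \<in> G"
  shows "Us ! k \<subseteq> X"
proof (rule ccontr)
  assume "\<not> Us ! k \<subseteq> X"
  then have ne: "Us ! k - X \<noteq> {}" by blast
  have S: "suf Us k = Us ! k \<union> suf Us (Suc k)" using suf_Suc[OF k] .
  have "(suf Us k - (Us ! k - X), Us ! k - X) \<in> G"
    using ba3[OF ba _ h, of "suf Us k - (Us ! k - X)" "Us ! k - X"] X S by blast
  then show False using bb_K[OF ba bb k _ ne] by blast
qed


lemma bb_exists_gen:
  fixes G :: "('a::finite) brel"
  assumes ba: "belief_algebra G"
  shows "\<exists>Us. (\<forall>U\<in>set Us. U \<noteq> {}) \<and>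
     (\<forall>i j. i < length Us \<longrightarrow> j < length Us \<longrightarrow> i \<noteq> j \<longrightarrow> Us ! i \<inter> Us ! j = {}) \<and>
     \<Union>(set Us) = S \<and>
     (\<forall>i. Suc i < length Us \<longrightarrow> (Us ! i, Us ! Suc i) \<in> G) \<and>
     (\<forall>i < length Us. \<forall>V1 V2. V1 \<subseteq> Us ! i \<longrightarrow> V2 \<subseteq> Us ! i \<longrightarrow> V1 \<inter> V2 = {} \<longrightarrow>
        V1 \<noteq> {} \<longrightarrow> V2 \<noteq> {} \<longrightarrow> (V1, V2) \<notin> G)"
  using finite[of S]
proof (induction S rule: finite_psubset_induct)
  case (psubset S)
  show ?case
  proof (cases "S = {}")
    case True then show ?thesis by (intro exI[of _ "[]"]) auto
  next
    case False
    define P where "P X \<longleftrightarrow> X \<noteq> {} \<and> X \<subseteq> S \<and> (X, S - X) \<in> G" for X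
    have "P S" using False ba1[OF ba, of S] by (simp add: P_def)
    then obtain X where PX: "P X" and minX: "\<And>Y. P Y \<Longrightarrow> card X \<le> card Y"
      using ex_has_least_nat[of P S card] by blast
    have Xne: "X \<noteq> {}" and XS: "X \<subseteq> S" and XG: "(X, S - X) \<in> G" using PX P_def by auto
    have "S - X \<subset> S" using Xne XS by blast
    from psubset.IH[OF this] obtain Us where UU: "(\<forall>U\<in>set Us. U \<noteq> {}) \<and>
     (\<forall>i j. i < length Us \<longrightarrow> j < length Us \<longrightarrow> i \<noteq> j \<longrightarrow> Us ! i \<inter> Us ! j = {}) \<and>
     \<Union>(set Us) = S - X \<and>
     (\<forall>i. Suc i < length Us \<longrightarrow> (Us ! i, Us ! Suc i) \<in> G) \<and>
     (\<forall>i < length Us. \<forall>V1 V2. V1 \<subseteq> Us ! i \<longrightarrow> V2 \<subseteq> Us ! i \<longrightarrow> V1 \<inter> V2 = {} \<longrightarrow>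
        V1 \<noteq> {} \<longrightarrow> V2 \<noteq> {} \<longrightarrow> (V1, V2) \<notin> G)" by (rule exE)
    have U1: "\<forall>U\<in>set Us. U \<noteq> {}"
      and U2: "\<forall>i j. i < length Us \<longrightarrow> j < length Us \<longrightarrow> i \<noteq> j \<longrightarrow> Us ! i \<inter> Us ! j = {}"
      and U3: "\<Union>(set Us) = S - X"
      and U4: "\<forall>i. Suc i < length Us \<longrightarrow> (Us ! i, Us ! Suc i) \<in> G"
      and U5: "\<forall>i < length Us. \<forall>V1 V2. V1 \<subseteq> Us ! i \<longrightarrow> V2 \<subseteq> Us ! i \<longrightarrow> V1 \<inter> V2 = {} \<longrightarrow>
        V1 \<noteq> {} \<longrightarrow> V2 \<noteq> {} \<longrightarrow> (V1, V2) \<notin> G"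
      using UU apply - apply (elim conjE, assumption)+ done
    have sub: "\<And>i. i < length Us \<Longrightarrow> Us ! i \<subseteq> S - X" using U3 nth_mem by blast
    have intX: "(V1, V2) \<notin> G" if V: "V1 \<subseteq> X" "V2 \<subseteq> X" "V1 \<inter> V2 = {}" "V1 \<noteq> {}" "V2 \<noteq> {}" for V1 V2
    proof
      assume h: "(V1, V2) \<in> G"
      have a: "(S - V2, V2) \<in> G" using ba3[OF ba _ h, of "S - V2" V2] V XS by blast
      have e: "X \<union> (S - X) = (S - V2) \<union> V2" using V XS by blast
      have "(X \<inter> (S - V2), (S - X) \<union> V2) \<in> G" using ba4[OF ba e XG a] .
      moreover have "X \<inter> (S - V2) = X - V2" "(S - X) \<union> V2 = S - (X - V2)" using XS V by auto
      ultimately have "P (X - V2)" unfolding P_def using V XS by auto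
      then have "card X \<le> card (X - V2)" by (rule minX)
      moreover have "card (X - V2) < card X"
        using V by (intro psubset_card_mono) auto
      ultimately show False by simp
    qed
    show ?thesis
    proof (intro exI[of _ "X # Us"] conjI)
      show "\<forall>U\<in>set (X # Us). U \<noteq> {}" using U1 Xne by simp
      show "\<Union>(set (X # Us)) = S" using U3 XS by auto
      show "\<forall>i j. i < length (X # Us) \<longrightarrow> j < length (X # Us) \<longrightarrow> i \<noteq> j \<longrightarrow> (X # Us) ! i \<inter> (X # Us) ! j = {}"
      proof (intro allI impI)
        fix i j assume i: "i < length (X # Us)" and j: "j < length (X # Us)" and ij: "i \<noteq> j"
        show "(X # Us) ! i \<inter> (X # Us) ! j = {}"
        proof (cases i)
          case 0
          then obtain j' where "j = Suc j'" "j' < length Us" using ij j by (cases j) auto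
          then show ?thesis using 0 sub[of j'] by auto
        next
          case (Suc i')
          show ?thesis
          proof (cases j)
            case 0 then show ?thesis using Suc sub[of i'] i by auto
          next
            case (Suc j') then show ?thesis using \<open>i = Suc i'\<close> U2 i j ij by auto
          qed
        qed
      qed
      show "\<forall>i. Suc i < length (X # Us) \<longrightarrow> ((X # Us) ! i, (X # Us) ! Suc i) \<in> G"
      proof (intro allI impI)
        fix i assume i: "Suc i < length (X # Us)"
        show "((X # Us) ! i, (X # Us) ! Suc i) \<in> G"
        proof (cases i)
          case 0
          then have "Us ! 0 \<subseteq> S - X" using sub i by simp
          then show ?thesis using 0 ba3[OF ba _ XG, of X "Us ! 0"] by auto
        next
          case (Suc i') then show ?thesis using U4 i by auto
        qed
      qed
      show "\<forall>i < length (X # Us). \<forall>V1 V2. V1 \<subseteq> (X # Us) ! i \<longrightarrow> V2 \<subseteq> (X # Us) ! i \<longrightarrow> V1 \<inter> V2 = {} \<longrightarrow>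
        V1 \<noteq> {} \<longrightarrow> V2 \<noteq> {} \<longrightarrow> (V1, V2) \<notin> G"
      proof (rule allI, rule impI)
        fix i assume i: "i < length (X # Us)"
        show "\<forall>V1 V2. V1 \<subseteq> (X # Us) ! i \<longrightarrow> V2 \<subseteq> (X # Us) ! i \<longrightarrow> V1 \<inter> V2 = {} \<longrightarrow>
          V1 \<noteq> {} \<longrightarrow> V2 \<noteq> {} \<longrightarrow> (V1, V2) \<notin> G"
        proof (cases i)
          case 0 then show ?thesis using intX by auto
        next
          case (Suc i') then show ?thesis using U5 i by auto
        qed
      qed
    qed
  qed
qed

lemma bb_exists:
  fixes G :: "('a::finite) brel"
  assumes ba: "belief_algebra G"
  shows "\<exists>Us. is_backbone G Us"
  using bb_exists_gen[OF ba, of UNIV] unfolding is_backbone_def by blast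

lemma suf_compl:
  assumes bb: "is_backbone G Us" and k: "k \<le> length Us"
  shows "suf Us k = UNIV - (\<Union>j\<in>{..<k}. Us ! j)"
proof (intro set_eqI iffI)
  fix w
  obtain i where i: "i < length Us" "w \<in> Us ! i" using bb_idx[OF bb] by blast
  {
    assume "w \<in> suf Us k"
    then have ki: "k \<le> i" using mem_suf[OF bb i] by simp
    show "w \<in> UNIV - (\<Union>j\<in>{..<k}. Us ! j)"
    proof (rule ccontr)
      assume "w \<notin> UNIV - (\<Union>j\<in>{..<k}. Us ! j)"
      then obtain j where "j < k" "w \<in> Us ! j" by auto
      then show False using bb_disj[OF bb i(1), of j] i ki k by auto
    qed
  }
  {
    assume "w \<in> UNIV - (\<Union>j\<in>{..<k}. Us ! j)"
    then have "\<not> i < k" using i by auto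
    then show "w \<in> suf Us k" using mem_suf[OF bb i] by simp
  }
qed

lemma suf_minus:
  assumes bb: "is_backbone G Us" and k: "k < length Us"
  shows "suf Us k - Us ! k = suf Us (Suc k)"
  using suf_Suc[OF k] bb_suf_disj[OF bb k] by blast

lemma bb_uniq_aux:
  assumes ba: "belief_algebra G" and bU: "is_backbone G Us" and bV: "is_backbone G Vs"
  shows "k < length Us \<longrightarrow> k < length Vs \<and> Us ! k = Vs ! k"
proof (induction k rule: less_induct)
  case (less k)
  show ?case
  proof
    assume kU: "k < length Us"
    have IH: "\<And>j. j < k \<Longrightarrow> j < length Vs \<and> Us ! j = Vs ! j" using less kU by auto
    have kV: "k < length Vs"
    proof (rule ccontr)
      assume "\<not> k < length Vs"
      obtain w where w: "w \<in> Us ! k" using bb_ne[OF bU kU] by blast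
      obtain j where j: "j < length Vs" "w \<in> Vs ! j" using bb_idx[OF bV] by blast
      have "j < k" using j \<open>\<not> k < length Vs\<close> by simp
      then show False using IH[of j] j w bb_disj[OF bU kU, of j] kU by auto
    qed
    have UN: "(\<Union>j\<in>{..<k}. Us ! j) = (\<Union>j\<in>{..<k}. Vs ! j)" using IH by auto
    have SS: "suf Us k = suf Vs k"
      using suf_compl[OF bU, of k] suf_compl[OF bV, of k] kU kV UN by simp
    have A: "Us ! k \<subseteq> Vs ! k"
    proof (rule bb_L1[OF ba bU kU])
      show "Vs ! k \<subseteq> suf Us k" using SS suf_Suc[OF kV] by blast
      show "(Vs ! k, suf Us k - Vs ! k) \<in> G" using SS suf_minus[OF bV kV] bb_T[OF ba bV kV] by simp
    qed
    have B: "Vs ! k \<subseteq> Us ! k"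
    proof (rule bb_L1[OF ba bV kV])
      show "Us ! k \<subseteq> suf Vs k" using SS suf_Suc[OF kU] by blast
      show "(Us ! k, suf Vs k - Us ! k) \<in> G" using SS suf_minus[OF bU kU] bb_T[OF ba bU kU] by simp
    qed
    show "k < length Vs \<and> Us ! k = Vs ! k" using A B kV by blast
  qed
qed

lemma bb_uniq:
  assumes ba: "belief_algebra G" and bU: "is_backbone G Us" and bV: "is_backbone G Vs"
  shows "Us = Vs"
proof -
  have l1: "length Us \<le> length Vs"
  proof (cases "length Us")
    case 0 then show ?thesis by simp
  next
    case (Suc m) then show ?thesis using bb_uniq_aux[OF ba bU bV, of m] by simp
  qed
  have l2: "length Vs \<le> length Us"
  proof (cases "length Vs")
    case 0 then show ?thesis by simp
  next
    case (Suc m) then show ?thesis using bb_uniq_aux[OF ba bV bU, of m] by simp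
  qed
  show ?thesis
    using l1 l2 bb_uniq_aux[OF ba bU bV] by (intro nth_equalityI) auto
qed

lemma backbone_is:
  fixes G :: "('a::finite) brel"
  assumes ba: "belief_algebra G"
  shows "is_backbone G (backbone G)"
proof -
  obtain Us where "is_backbone G Us" using bb_exists[OF ba] by blast
  then have "\<exists>!Us. is_backbone G Us" using bb_uniq[OF ba] by blast
  then show ?thesis unfolding backbone_def by (rule theI')
qed

lemma least_idx:
  assumes bb: "is_backbone G Us" and i: "i < length Us" and w: "w \<in> Us ! i"
  shows "(LEAST j. w \<in> Us ! j) = i"
proof (rule Least_equality)
  show "w \<in> Us ! i" by (rule w)
  fix j assume j: "w \<in> Us ! j"
  show "i \<le> j"
  proof (rule ccontr)
    assume "\<not> i \<le> j"
    then have "j < i" by simp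
    then show False using bb_disj[OF bb i, of j] i j w by auto
  qed
qed

lemma blk_props:
  fixes G :: "('a::finite) brel"
  assumes ba: "belief_algebra G"
  shows "blk G w < length (backbone G) \<and> w \<in> backbone G ! blk G w"
proof -
  note bb = backbone_is[OF ba]
  obtain i where i: "i < length (backbone G)" "w \<in> backbone G ! i" using bb_idx[OF bb] by blast
  have "blk G w = i" unfolding blk_def using least_idx[OF bb i] .
  then show ?thesis using i by simp
qed

lemma blk_eq:
  fixes G :: "('a::finite) brel"
  assumes ba: "belief_algebra G" and i: "i < length (backbone G)" and w: "w \<in> backbone G ! i"
  shows "blk G w = i"
  unfolding blk_def using least_idx[OF backbone_is[OF ba] i w] .

lemma G_sub_Com:
  fixes G :: "('a::finite) brel"
  assumes ba: "belief_algebra G"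
  shows "G \<subseteq> Com G"
proof
  fix p assume "p \<in> G"
  then obtain U V where p: "p = (U, V)" and h: "(U, V) \<in> G" by (cases p) auto
  note bb = backbone_is[OF ba]
  define Us where "Us = backbone G"
  have disj: "U \<inter> V = {}" using ba0[OF ba h] .
  have "\<exists>w1\<in>U. \<forall>w2\<in>V. blk G w1 < blk G w2"
  proof (cases "V = {}")
    case True
    then have "U \<noteq> {}" using h ba_noempty[OF ba] by auto
    then show ?thesis using True by auto
  next
    case False
    then obtain v0 where v0: "v0 \<in> V" by blast
    define k where "k = (LEAST k. \<exists>v\<in>V. blk G v = k)"
    have "\<exists>v\<in>V. blk G v = k" unfolding k_def by (rule LeastI_ex) (use v0 in blast)
    then obtain v where v: "v \<in> V" "blk G v = k" by blast
    have kmin: "\<And>v'. v' \<in> V \<Longrightarrow> k \<le> blk G v'" unfolding k_def by (rule Least_le) blast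
    have k: "k < length Us" using blk_props[OF ba, of v] v Us_def by simp
    show ?thesis
    proof (rule ccontr)
      assume "\<not> (\<exists>w1\<in>U. \<forall>w2\<in>V. blk G w1 < blk G w2)"
      then have "\<forall>u\<in>U. \<exists>v'\<in>V. blk G v' \<le> blk G u" by (simp add: not_less)
      then have "\<forall>u\<in>U. k \<le> blk G u" using kmin by (meson order_trans)
      then have Usub: "U \<subseteq> suf Us k"
        using mem_suf[OF bb] blk_props[OF ba] Us_def by blast
      define V' where "V' = V \<inter> Us ! k"
      have V'ne: "V' \<noteq> {}" using v blk_props[OF ba, of v] V'_def Us_def by auto
      have "(suf Us k - V', V') \<in> G"
        using ba3[OF ba _ h, of "suf Us k - V'" V'] Usub disj V'_def by blast
      then show False using bb_K[OF ba bb[folded Us_def] k _ V'ne] V'_def by blast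
    qed
  qed
  then show "p \<in> Com G" using p disj Com_mem by blast
qed

lemma Com_bb:
  fixes G :: "('a::finite) brel"
  assumes ba: "belief_algebra G"
  shows "is_backbone (Com G) (backbone G)"
proof -
  note bb = backbone_is[OF ba]
  define Us where "Us = backbone G"
  have bb': "is_backbone G Us" using bb Us_def by simp
  show ?thesis unfolding is_backbone_def Us_def[symmetric]
  proof (intro conjI allI impI)
    show "\<forall>U\<in>set Us. U \<noteq> {}" using bb' unfolding is_backbone_def by (elim conjE)
    show "\<Union>(set Us) = UNIV" using bb' unfolding is_backbone_def by (elim conjE)
    show "\<And>i j. i < length Us \<Longrightarrow> j < length Us \<Longrightarrow> i \<noteq> j \<Longrightarrow> Us ! i \<inter> Us ! j = {}"
      using bb_disj[OF bb'] by blast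
  next
    fix i assume i: "Suc i < length Us"
    obtain w where w: "w \<in> Us ! i" using bb_ne[OF bb', of i] i by fastforce
    have bw: "blk G w = i" using blk_eq[OF ba, of i w] i w Us_def by simp
    have "\<forall>v\<in>Us ! Suc i. blk G w < blk G v" using blk_eq[OF ba, of "Suc i"] i bw Us_def by simp
    moreover have "Us ! i \<inter> Us ! Suc i = {}" using bb_disj[OF bb', of i "Suc i"] i by simp
    ultimately show "(Us ! i, Us ! Suc i) \<in> Com G" using w Com_mem by blast
  next
    fix i V1 V2 assume i: "i < length Us" and V: "V1 \<subseteq> Us ! i" "V2 \<subseteq> Us ! i" "V1 \<inter> V2 = {}"
      "V1 \<noteq> {}" "V2 \<noteq> {}"
    have "\<And>w. w \<in> Us ! i \<Longrightarrow> blk G w = i" using blk_eq[OF ba, of i] i Us_def by simp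
    then show "(V1, V2) \<notin> Com G" using V Com_mem[of V1 V2 G] by fastforce
  qed
qed

lemma backbone_Com:
  fixes G :: "('a::finite) brel"
  assumes ba: "belief_algebra G"
  shows "backbone (Com G) = backbone G"
  using bb_uniq[OF Com_ba backbone_is[OF Com_ba] Com_bb[OF ba]] .

lemma ba_le_Com:
  fixes G :: "('a::finite) brel"
  assumes ba: "belief_algebra G"
  shows "ba_le G (Com G)"
  unfolding ba_le_def using backbone_Com[OF ba] G_sub_Com[OF ba] by simp

theorem theorem5:
  fixes rev :: "('a::finite) brel \<Rightarrow> 'a brel \<Rightarrow> 'a brel"
  assumes closed: "\<And>G1 G2. belief_algebra G1 \<Longrightarrow> belief_algebra G2 \<Longrightarrow> belief_algebra (rev G1 G2)"
    and RA1: "\<And>G1 G2. belief_algebra G1 \<Longrightarrow> belief_algebra G2 \<Longrightarrow> G2 \<subseteq> rev G1 G2"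
    and RA2: "\<And>G1 G2. belief_algebra G1 \<Longrightarrow> belief_algebra G2 \<Longrightarrow>
               \<exists>\<Omega>. \<Omega> \<subseteq> G1 \<union> G2 \<and> rev G1 G2 = Gen \<Omega>"
    and RA3: "\<And>G1 G2. belief_algebra G1 \<Longrightarrow> belief_algebra G2 \<Longrightarrow> is_CBA G1 \<Longrightarrow> is_CBA G2 \<Longrightarrow>
               is_CBA (rev G1 G2)"
    and RA4: "\<And>G1 G2 w w'. belief_algebra G1 \<Longrightarrow> belief_algebra G2 \<Longrightarrow> is_CBA G1 \<Longrightarrow> is_CBA G2 \<Longrightarrow>
               support G2 {w} = support G2 {w'} \<Longrightarrow>
               (({w}, {w'}) \<in> rev G1 G2 \<longleftrightarrow> ({w}, {w'}) \<in> G1)"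
    and RA5: "\<And>G1 G2 G1' G2'. belief_algebra G1 \<Longrightarrow> belief_algebra G2 \<Longrightarrow>
               belief_algebra G1' \<Longrightarrow> belief_algebra G2' \<Longrightarrow>
               ba_le G1 G1' \<Longrightarrow> ba_le G2 G2' \<Longrightarrow> rev G1 G2 \<subseteq> rev G1' G2'"
    and RA6: "\<And>G1 G2 \<Omega>. belief_algebra G1 \<Longrightarrow> belief_algebra G2 \<Longrightarrow>
               \<Omega> \<subseteq> G1 \<union> G2 \<Longrightarrow> Gen \<Omega> \<subseteq> rev (Com G1) (Com G2) \<Longrightarrow>
               rev G1 G2 \<subseteq> Gen \<Omega> \<Longrightarrow> rev G1 G2 = Gen \<Omega>"
    and G1: "belief_algebra G1" and G2: "belief_algebra G2"
  shows "rev G1 G2 = Gen ((G1 \<union> G2) \<inter> rev (Com G1) (Com G2))"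
proof (rule RA6[OF G1 G2])
  define R where "R = rev (Com G1) (Com G2)"
  have baR: "belief_algebra R" unfolding R_def by (rule closed[OF Com_ba Com_ba])
  show "(G1 \<union> G2) \<inter> rev (Com G1) (Com G2) \<subseteq> G1 \<union> G2" by blast
  show "Gen ((G1 \<union> G2) \<inter> rev (Com G1) (Com G2)) \<subseteq> rev (Com G1) (Com G2)"
    using Gen_least[OF baR, of "(G1 \<union> G2) \<inter> R"] R_def by blast
  obtain \<Omega> where O: "\<Omega> \<subseteq> G1 \<union> G2" "rev G1 G2 = Gen \<Omega>" using RA2[OF G1 G2] by blast
  have sub: "rev G1 G2 \<subseteq> R"
    unfolding R_def by (rule RA5[OF G1 G2 Com_ba Com_ba ba_le_Com[OF G1] ba_le_Com[OF G2]])
  have "\<Omega> \<subseteq> Gen \<Omega>" by (blast intro: Gen.base)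
  then have "\<Omega> \<subseteq> (G1 \<union> G2) \<inter> R" using O sub by blast
  then show "rev G1 G2 \<subseteq> Gen ((G1 \<union> G2) \<inter> rev (Com G1) (Com G2))"
    using O(2) Gen_mono R_def by metis
qed

end
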